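(* Assume $e_{-1}+e_{+1}<1$. For any two measurable classifiers $f,g:\mathcal X\to\{-1,+1\}$, $$\mathbb E_{\tilde{\mathcal D}}[\mathbb 1_{\mathrm{peer}}(f(X),\tilde Y)]\le\mathbb E_{\tilde{\mathcal D}}[\mathbb 1_{\mathrm{peer}}(g(X),\tilde Y)]\iff R_{-1}(f)+R_{+1}(f)\le R_{-1}(g)+R_{+1}(g),$$ i.e. minimizing $\mathbb E_{\tilde{\mathcal D}}[\mathbb 1_{\mathrm{peer}}(f(X),\tilde Y)]$ is equivalent to minimizing $R_{-1}(f)+R_{+1}(f)$.
   Context: Let $\mathcal X\subseteq\mathbb R^d$ and let $(X,Y)$ be a random pair with distribution $\mathcal D$ on $\mathcal X\times\{-1,+1\}$, with $p:=\mathbb P(Y=+1)\in(0,1)$. A noisy label $\tilde Y\in\{-1,+1\}$ is generated with noise rates $e_{+1}:=\mathbb P(\tilde Y=-1\mid Y=+1)$, $e_{-1}:=\mathbb P(\tilde Y=+1\mid Y=-1)$, where $\tilde Y$ is conditionally independent of $X$ given $Y$; $\tilde{\mathcal D}$ is the distribution of $(X,\tilde Y)$. For a classifier $f$, $R_{+1}(f):=\mathbb P(f(X)=-1\mid Y=+1)$ and $R_{-1}(f):=\mathbb P(f(X)=+1\mid Y=-1)$. The 0-1 loss is $\mathbb 1(a,b)=1$ if $a\neq b$ and $0$ otherwise, and $$\mathbb E_{\tilde{\mathcal D}}[\mathbb 1_{\mathrm{peer}}(f(X),\tilde Y)]:=\mathbb E[\mathbb 1(f(X),\tilde Y)]-\mathbb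 E[\mathbb 1(f(X_1),\tilde Y_2)],$$ where $(X,\tilde Y),(X_1,\tilde Y_1),(X_2,\tilde Y_2)$ are i.i.d. draws from $\tilde{\mathcal D}$. *)

theory Defs
  imports "HOL-Probability.Probability"
begin

definition loss01 :: "int \<Rightarrow> int \<Rightarrow> real" where
  "loss01 a b = (if a \<noteq> b then 1 else 0)"

definition cprob :: "'w measure \<Rightarrow> 'w set \<Rightarrow> 'w set \<Rightarrow> real" where
  "cprob M A B = measure M (A \<inter> B) / measure M B"

text \<open>Expected peer 0-1 loss under a distribution D of (X, noisy label):
  E[1(f X, Y~)] - E[1(f X1, Y~2)], where (X1,Y~1),(X2,Y~2) are i.i.d. draws from D.\<close>
definition peer_risk :: "('a \<times> int) measure \<Rightarrow> ('a \<Rightarrow> int) \<Rightarrow> real" where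
  "peer_risk D f =
     (\<integral>z. loss01 (f (fst z)) (snd z) \<partial>D)
     - (\<integral>zz. loss01 (f (fst (fst zz))) (snd (snd zz)) \<partial>(D \<Otimes>\<^sub>M D))"

end

theory Submission
  imports Defs
begin


lemma msplit:
  assumes "prob_space M" "{w\<in>space M. P w} \<in> sets M" "{w\<in>space M. Q w} \<in> sets M"
  shows "measure M {w\<in>space M. P w} = measure M {w\<in>space M. P w \<and> Q w} + measure M {w\<in>space M. P w \<and> \<not> Q w}"
proof -
  interpret prob_space M by fact
  have e: "{w\<in>space M. P w} = {w\<in>space M. P w \<and> Q w} \<union> {w\<in>space M. P w \<and> \<not> Q w}" by auto
  have "{w\<in>space M. P w \<and> Q w} \<in> sets M" "{w\<in>space M. P w \<and> \<not> Q w} \<in> sets M"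
    using assms(2,3) by (auto intro: sets.sets_Collect_conj sets.sets_Collect_neg simp: Collect_conj_eq[symmetric])
  then show ?thesis unfolding e by (subst finite_measure_Union) auto
qed

lemma int_if:
  assumes "prob_space M" "{w\<in>space M. P w} \<in> sets M"
  shows "(\<integral>w. (if P w then 1 else 0::real) \<partial>M) = measure M {w\<in>space M. P w}"
proof -
  have "(\<integral>w. (if P w then 1 else 0::real) \<partial>M) = (\<integral>w. indicator {w\<in>space M. P w} w \<partial>M)"
    by (rule Bochner_Integration.integral_cong) (auto simp: indicator_def)
  also have "\<dots> = measure M {w\<in>space M. P w}" by (simp add: Int_absorb2)
  finally show ?thesis .
qed



lemma peer_int:
  fixes M :: "'w measure" and X :: "'w \<Rightarrow> 'a::euclidean_space" and Yt :: "'w \<Rightarrow> int" and h :: "'a \<Rightarrow> int"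
  assumes prob: "prob_space M"
    and X_meas[measurable]: "X \<in> measurable M (restrict_space borel \<X>)"
    and Yt_meas[measurable]: "Yt \<in> measurable M (count_space UNIV)"
    and h_meas[measurable]: "h \<in> measurable (restrict_space borel \<X>) (count_space UNIV)"
    and h_vals: "\<And>x. x \<in> \<X> \<Longrightarrow> h x \<in> {-1, 1}"
    and D: "D = distr M (restrict_space borel \<X> \<Otimes>\<^sub>M count_space UNIV) (\<lambda>\<omega>. (X \<omega>, Yt \<omega>))"
  shows "peer_risk D h = measure M {w\<in>space M. h (X w) = 1 \<and> Yt w \<noteq> 1 \<or> h (X w) = -1 \<and> Yt w \<noteq> -1}
     - (measure M {w\<in>space M. h (X w) = 1} * measure M {w\<in>space M. Yt w \<noteq> 1}
       + measure M {w\<in>space M. h (X w) = -1} * measure M {w\<in>space M. Yt w \<noteq> -1})"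
proof -
  interpret M: prob_space M by fact
  let ?N = "restrict_space borel \<X> \<Otimes>\<^sub>M count_space UNIV"
  have T[measurable]: "(\<lambda>\<omega>. (X \<omega>, Yt \<omega>)) \<in> measurable M ?N" by measurable
  interpret D: prob_space D unfolding D by (rule M.prob_space_distr[OF T])
  interpret DD: pair_prob_space D D ..
  have spD: "space D = \<X> \<times> UNIV" unfolding D by (simp add: space_pair_measure space_restrict_space)
  have XX: "X w \<in> \<X>" if "w \<in> space M" for w
    using measurable_space[OF X_meas that] by (simp add: space_restrict_space)
  have sD: "sets D = sets ?N" unfolding D by simp
  have hm[measurable]: "(\<lambda>z. h (fst z)) \<in> measurable ?N (count_space UNIV)" by measurable
  have ym[measurable]: "(\<lambda>z. snd z) \<in> measurable ?N (count_space UNIV)" by measurable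
  define \<phi>1 where "\<phi>1 = (\<lambda>z::'a\<times>int. if h (fst z) = 1 then 1 else (0::real))"
  define \<phi>2 where "\<phi>2 = (\<lambda>z::'a\<times>int. if h (fst z) = -1 then 1 else (0::real))"
  define \<psi>1 where "\<psi>1 = (\<lambda>z::'a\<times>int. if snd z \<noteq> 1 then 1 else (0::real))"
  define \<psi>2 where "\<psi>2 = (\<lambda>z::'a\<times>int. if snd z \<noteq> -1 then 1 else (0::real))"
  have m1[measurable]: "\<phi>1 \<in> borel_measurable ?N" "\<phi>2 \<in> borel_measurable ?N"
     "\<psi>1 \<in> borel_measurable ?N" "\<psi>2 \<in> borel_measurable ?N"
    unfolding \<phi>1_def \<phi>2_def \<psi>1_def \<psi>2_def by measurable
  have m2[measurable]: "\<phi>1 \<in> borel_measurable D" "\<phi>2 \<in> borel_measurable D"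
     "\<psi>1 \<in> borel_measurable D" "\<psi>2 \<in> borel_measurable D"
    using m1 by (simp_all add: measurable_cong_sets[OF sD refl])
  have bnd: "integrable D \<phi>1" "integrable D \<phi>2" "integrable D \<psi>1" "integrable D \<psi>2"
    by (intro D.integrable_const_bound[where B=1] AE_I2 m2; simp add: \<phi>1_def \<phi>2_def \<psi>1_def \<psi>2_def)+
  have I: "integral\<^sup>L D k = (\<integral>w. k (X w, Yt w) \<partial>M)" if "k \<in> borel_measurable ?N" for k :: "'a\<times>int \<Rightarrow> real"
    unfolding D by (rule integral_distr[OF T that])
  have i1: "integral\<^sup>L D \<phi>1 = measure M {w\<in>space M. h (X w) = 1}"
    using I[OF m1(1)] int_if[OF prob, of "\<lambda>w. h (X w) = 1"] unfolding \<phi>1_def by simp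
  have i2: "integral\<^sup>L D \<phi>2 = measure M {w\<in>space M. h (X w) = -1}"
    using I[OF m1(2)] int_if[OF prob, of "\<lambda>w. h (X w) = -1"] unfolding \<phi>2_def by simp
  have i3: "integral\<^sup>L D \<psi>1 = measure M {w\<in>space M. Yt w \<noteq> 1}"
    using I[OF m1(3)] int_if[OF prob, of "\<lambda>w. Yt w \<noteq> 1"] unfolding \<psi>1_def by simp
  have i4: "integral\<^sup>L D \<psi>2 = measure M {w\<in>space M. Yt w \<noteq> -1}"
    using I[OF m1(4)] int_if[OF prob, of "\<lambda>w. Yt w \<noteq> -1"] unfolding \<psi>2_def by simp
  have first: "(\<integral>z. loss01 (h (fst z)) (snd z) \<partial>D) = measure M {w\<in>space M. h (X w) = 1 \<and> Yt w \<noteq> 1 \<or> h (X w) = -1 \<and> Yt w \<noteq> -1}"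
  proof -
    have "(\<integral>z. loss01 (h (fst z)) (snd z) \<partial>D) = (\<integral>z. (if h (fst z) = 1 \<and> snd z \<noteq> 1 \<or> h (fst z) = -1 \<and> snd z \<noteq> -1 then 1 else 0) \<partial>D)"
      apply (rule Bochner_Integration.integral_cong[OF refl])
      using h_vals unfolding spD loss01_def by fastforce
    also have "\<dots> = measure M {w\<in>space M. h (X w) = 1 \<and> Yt w \<noteq> 1 \<or> h (X w) = -1 \<and> Yt w \<noteq> -1}"
      by (subst I) (measurable, simp add: int_if[OF prob])
    finally show ?thesis .
  qed
  have second: "(\<integral>zz. loss01 (h (fst (fst zz))) (snd (snd zz)) \<partial>(D \<Otimes>\<^sub>M D))
     = integral\<^sup>L D \<phi>1 * integral\<^sup>L D \<psi>1 + integral\<^sup>L D \<phi>2 * integral\<^sup>L D \<psi>2"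
  proof -
    have "(\<integral>zz. loss01 (h (fst (fst zz))) (snd (snd zz)) \<partial>(D \<Otimes>\<^sub>M D))
       = (\<integral>zz. \<phi>1 (fst zz) * \<psi>1 (snd zz) + \<phi>2 (fst zz) * \<psi>2 (snd zz) \<partial>(D \<Otimes>\<^sub>M D))"
      apply (rule Bochner_Integration.integral_cong[OF refl])
      using h_vals unfolding space_pair_measure spD loss01_def \<phi>1_def \<phi>2_def \<psi>1_def \<psi>2_def by fastforce
    also have "\<dots> = (\<integral>x. (\<integral>y. \<phi>1 x * \<psi>1 y + \<phi>2 x * \<psi>2 y \<partial>D) \<partial>D)"
    proof (rule DD.integral_fst'[symmetric, where f="\<lambda>zz. \<phi>1 (fst zz) * \<psi>1 (snd zz) + \<phi>2 (fst zz) * \<psi>2 (snd zz)", simplified])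
      show "integrable (D \<Otimes>\<^sub>M D) (\<lambda>zz. \<phi>1 (fst zz) * \<psi>1 (snd zz) + \<phi>2 (fst zz) * \<psi>2 (snd zz))"
        apply (rule DD.P.integrable_const_bound[where B=2])
        subgoal by (auto simp: \<phi>1_def \<phi>2_def \<psi>1_def \<psi>2_def)
        by measurable
    qed
    also have "\<dots> = (\<integral>x. \<phi>1 x * integral\<^sup>L D \<psi>1 + \<phi>2 x * integral\<^sup>L D \<psi>2 \<partial>D)"
      by (rule Bochner_Integration.integral_cong[OF refl]) (simp add: bnd)
    also have "\<dots> = integral\<^sup>L D \<phi>1 * integral\<^sup>L D \<psi>1 + integral\<^sup>L D \<phi>2 * integral\<^sup>L D \<psi>2"
      by (simp add: bnd)
    finally show ?thesis .
  qed
  show ?thesis unfolding peer_risk_def first second i1 i2 i3 i4 ..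
qed


lemma alg: assumes "py > 0" "pm > 0" "py + pm = (1::real)" shows "a1 * n1 / py + a2 * (pm - n2) / pm + (py - a1) * (py - n1) / py + (pm - a2) * n2 / pm
       - ((a1 + a2) * (n1 + (pm - n2)) + ((py - a1) + (pm - a2)) * ((py - n1) + n2)) = 2 * py * pm * (1 - n2 / pm - n1 / py) * (a2 / pm - a1 / py)"
proof -
  define qa where "qa = a1/py"
  define qb where "qb = a2/pm"
  define qc where "qc = n1/py"
  define qd where "qd = n2/pm"
  have e: "a1 = qa*py" "a2 = qb*pm" "n1 = qc*py" "n2 = qd*pm" using assms unfolding qa_def qb_def qc_def qd_def by auto
  have "qa * py * (qc * py) / py + qb * pm * (pm - qd * pm) / pm + (py - qa * py) * (py - qc * py) / py + (pm - qb * pm) * (qd * pm) / pm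
       - ((qa * py + qb * pm) * (qc * py + (pm - qd * pm)) + ((py - qa * py) + (pm - qb * pm)) * ((py - qc * py) + qd * pm))
      = qa * (qc * py) + qb * (pm - qd * pm) + (1 - qa) * (py - qc * py) + (1 - qb) * (qd * pm)
       - ((qa * py + qb * pm) * (qc * py + (pm - qd * pm)) + ((py - qa * py) + (pm - qb * pm)) * ((py - qc * py) + qd * pm))"
    using assms by (simp add: field_simps)
  also have "\<dots> = 2 * py * pm * (1 - qd - qc) * (qb - qa)"
    using assms(3) by algebra
  finally show ?thesis unfolding e using assms by simp
qed


lemma mcong: "(\<And>w. w \<in> space M \<Longrightarrow> P w = Q w) \<Longrightarrow> measure M {w\<in>space M. P w} = measure M {w\<in>space M. Q w}"
  by (metis (mono_tags, lifting) Collect_cong)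

lemma peer_formula:
  fixes M :: "'w measure" and X :: "'w \<Rightarrow> 'a::euclidean_space" and Y Yt :: "'w \<Rightarrow> int" and h :: "'a \<Rightarrow> int"
  assumes prob: "prob_space M"
    and X_meas[measurable]: "X \<in> measurable M (restrict_space borel \<X>)"
    and Y_meas[measurable]: "Y \<in> measurable M (count_space UNIV)"
    and Yt_meas[measurable]: "Yt \<in> measurable M (count_space UNIV)"
    and Y_vals: "\<And>\<omega>. \<omega> \<in> space M \<Longrightarrow> Y \<omega> \<in> {-1, 1}"
    and Yt_vals: "\<And>\<omega>. \<omega> \<in> space M \<Longrightarrow> Yt \<omega> \<in> {-1, 1}"
    and p_pos: "0 < measure M {\<omega> \<in> space M. Y \<omega> = 1}"
    and p_lt1: "measure M {\<omega> \<in> space M. Y \<omega> = 1} < 1"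
    and cond_indep: "\<And>A y yt. A \<in> sets (restrict_space borel \<X>) \<Longrightarrow>
        measure M {\<omega> \<in> space M. X \<omega> \<in> A \<and> Yt \<omega> = yt \<and> Y \<omega> = y} * measure M {\<omega> \<in> space M. Y \<omega> = y}
        = measure M {\<omega> \<in> space M. X \<omega> \<in> A \<and> Y \<omega> = y} * measure M {\<omega> \<in> space M. Yt \<omega> = yt \<and> Y \<omega> = y}"
    and h_meas[measurable]: "h \<in> measurable (restrict_space borel \<X>) (count_space UNIV)"
    and h_vals: "\<And>x. x \<in> \<X> \<Longrightarrow> h x \<in> {-1, 1}"
  shows "peer_risk (distr M (restrict_space borel \<X> \<Otimes>\<^sub>M count_space UNIV) (\<lambda>\<omega>. (X \<omega>, Yt \<omega>))) h
    = 2 * measure M {\<omega> \<in> space M. Y \<omega> = 1} * measure M {\<omega> \<in> space M. Y \<omega> = -1}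
      * (1 - measure M {\<omega> \<in> space M. Yt \<omega> = 1 \<and> Y \<omega> = -1} / measure M {\<omega> \<in> space M. Y \<omega> = -1}
           - measure M {\<omega> \<in> space M. Yt \<omega> = -1 \<and> Y \<omega> = 1} / measure M {\<omega> \<in> space M. Y \<omega> = 1})
      * (measure M {\<omega> \<in> space M. h (X \<omega>) = 1 \<and> Y \<omega> = -1} / measure M {\<omega> \<in> space M. Y \<omega> = -1}
         - measure M {\<omega> \<in> space M. h (X \<omega>) = 1 \<and> Y \<omega> = 1} / measure M {\<omega> \<in> space M. Y \<omega> = 1})"
proof -
  interpret M: prob_space M by fact
  have XX: "X w \<in> \<X>" if "w \<in> space M" for w
    using measurable_space[OF X_meas that] by (simp add: space_restrict_space)
  have hX[measurable]: "(\<lambda>w. h (X w)) \<in> measurable M (count_space UNIV)" by measurable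
  note sp = msplit[OF prob]
  define py where "py = measure M {\<omega> \<in> space M. Y \<omega> = 1}"
  define pm where "pm = measure M {\<omega> \<in> space M. Y \<omega> = -1}"
  define a1 where "a1 = measure M {\<omega> \<in> space M. h (X \<omega>) = 1 \<and> Y \<omega> = 1}"
  define a2 where "a2 = measure M {\<omega> \<in> space M. h (X \<omega>) = 1 \<and> Y \<omega> = -1}"
  define n1 where "n1 = measure M {\<omega> \<in> space M. Yt \<omega> = -1 \<and> Y \<omega> = 1}"
  define n2 where "n2 = measure M {\<omega> \<in> space M. Yt \<omega> = 1 \<and> Y \<omega> = -1}"
  have Yn1: "\<And>w. w \<in> space M \<Longrightarrow> (Y w \<noteq> 1) = (Y w = -1)" using Y_vals by force
  have Ytn1: "\<And>w. w \<in> space M \<Longrightarrow> (Yt w \<noteq> 1) = (Yt w = -1)" using Yt_vals by force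
  have Ytn2: "\<And>w. w \<in> space M \<Longrightarrow> (Yt w \<noteq> -1) = (Yt w = 1)" using Yt_vals by force
  have hn1: "\<And>w. w \<in> space M \<Longrightarrow> (h (X w) \<noteq> 1) = (h (X w) = -1)" using h_vals XX by force
  have pyz: "py > 0" using p_pos py_def by simp
  have tot: "py + pm = 1"
  proof -
    have "1 = measure M {w\<in>space M. True}" using M.prob_space by simp
    also have "\<dots> = py + pm" unfolding py_def pm_def
      by (subst sp[of "\<lambda>_. True" "\<lambda>w. Y w = 1"]; simp; rule mcong; simp add: Yn1)
    finally show ?thesis by simp
  qed
  have pmz: "pm > 0" using tot p_lt1 py_def by simp
  have ci: "measure M {w\<in>space M. h (X w) = c \<and> Yt w = yt \<and> Y w = y} * measure M {w\<in>space M. Y w = y}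
     = measure M {w\<in>space M. h (X w) = c \<and> Y w = y} * measure M {w\<in>space M. Yt w = yt \<and> Y w = y}" for c yt y
  proof -
    have A: "h -` {c} \<inter> space (restrict_space borel \<X>) \<in> sets (restrict_space borel \<X>)"
      by (rule measurable_sets[OF h_meas]) simp
    have e: "\<And>w. w \<in> space M \<Longrightarrow> (X w \<in> h -` {c} \<inter> space (restrict_space borel \<X>)) = (h (X w) = c)"
      using XX by (auto simp: space_restrict_space)
    have "measure M {w\<in>space M. h (X w) = c \<and> Yt w = yt \<and> Y w = y} = measure M {w\<in>space M. X w \<in> h -` {c} \<inter> space (restrict_space borel \<X>) \<and> Yt w = yt \<and> Y w = y}"
      by (rule mcong) (use XX in \<open>auto simp: space_restrict_space\<close>)
    moreover have "measure M {w\<in>space M. h (X w) = c \<and> Y w = y} = measure M {w\<in>space M. X w \<in> h -` {c} \<inter> space (restrict_space borel \<X>) \<and> Y w = y}"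
      by (rule mcong) (use XX in \<open>auto simp: space_restrict_space\<close>)
    ultimately show ?thesis using cond_indep[OF A] by simp
  qed
  have peer: "peer_risk (distr M (restrict_space borel \<X> \<Otimes>\<^sub>M count_space UNIV) (\<lambda>\<omega>. (X \<omega>, Yt \<omega>))) h
     = measure M {w\<in>space M. h (X w) = 1 \<and> Yt w \<noteq> 1 \<or> h (X w) = -1 \<and> Yt w \<noteq> -1}
     - (measure M {w\<in>space M. h (X w) = 1} * measure M {w\<in>space M. Yt w \<noteq> 1}
       + measure M {w\<in>space M. h (X w) = -1} * measure M {w\<in>space M. Yt w \<noteq> -1})"
    by (rule peer_int[OF prob X_meas Yt_meas h_meas h_vals refl])
  have f1: "measure M {w\<in>space M. h (X w) = 1 \<and> Yt w \<noteq> 1 \<or> h (X w) = -1 \<and> Yt w \<noteq> -1}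
     = measure M {w\<in>space M. h (X w) = 1 \<and> Yt w = -1} + measure M {w\<in>space M. h (X w) = -1 \<and> Yt w = 1}"
    apply (subst sp[of _ "\<lambda>w. h (X w) = 1"]) apply measurable
    apply (intro arg_cong2[where f="(+)"]; rule mcong) using hn1 Ytn1 Ytn2 by auto
  have f2: "measure M {w\<in>space M. h (X w) = c \<and> Yt w = yt}
     = measure M {w\<in>space M. h (X w) = c \<and> Yt w = yt \<and> Y w = 1} + measure M {w\<in>space M. h (X w) = c \<and> Yt w = yt \<and> Y w = -1}" for c yt
    apply (subst sp[of _ "\<lambda>w. Y w = 1"]) apply measurable
    apply (intro arg_cong2[where f="(+)"]; rule mcong) using Yn1 by auto
  have f3: "measure M {w\<in>space M. P w \<and> Y w = -1} = measure M {w\<in>space M. Y w = -1} - measure M {w\<in>space M. Q w \<and> Y w = -1}"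
    if "\<And>w. w \<in> space M \<Longrightarrow> P w = (\<not> Q w)" "{w\<in>space M. Q w} \<in> sets M" for P Q
  proof -
    have "measure M {w\<in>space M. Y w = -1} = measure M {w\<in>space M. Y w = -1 \<and> Q w} + measure M {w\<in>space M. Y w = -1 \<and> \<not> Q w}"
      apply (rule sp) subgoal by measurable using that(2) by simp
    moreover have "measure M {w\<in>space M. Y w = -1 \<and> Q w} = measure M {w\<in>space M. Q w \<and> Y w = -1}" by (rule mcong) auto
    moreover have "measure M {w\<in>space M. Y w = -1 \<and> \<not> Q w} = measure M {w\<in>space M. P w \<and> Y w = -1}" by (rule mcong) (use that in auto)
    ultimately show ?thesis by simp
  qed
  have f3': "measure M {w\<in>space M. P w \<and> Y w = 1} = measure M {w\<in>space M. Y w = 1} - measure M {w\<in>space M. Q w \<and> Y w = 1}"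
    if "\<And>w. w \<in> space M \<Longrightarrow> P w = (\<not> Q w)" "{w\<in>space M. Q w} \<in> sets M" for P Q
  proof -
    have "measure M {w\<in>space M. Y w = 1} = measure M {w\<in>space M. Y w = 1 \<and> Q w} + measure M {w\<in>space M. Y w = 1 \<and> \<not> Q w}"
      apply (rule sp) subgoal by measurable using that(2) by simp
    moreover have "measure M {w\<in>space M. Y w = 1 \<and> Q w} = measure M {w\<in>space M. Q w \<and> Y w = 1}" by (rule mcong) auto
    moreover have "measure M {w\<in>space M. Y w = 1 \<and> \<not> Q w} = measure M {w\<in>space M. P w \<and> Y w = 1}" by (rule mcong) (use that in auto)
    ultimately show ?thesis by simp
  qed
  have f4: "measure M {w\<in>space M. P w} = measure M {w\<in>space M. P w \<and> Y w = 1} + measure M {w\<in>space M. P w \<and> Y w = -1}"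
    if "{w\<in>space M. P w} \<in> sets M" for P
    apply (subst sp[of _ "\<lambda>w. Y w = 1"]) using that apply simp apply measurable
    apply (intro arg_cong2[where f="(+)"]; rule mcong) using Yn1 by auto
  have hm1: "measure M {w\<in>space M. h (X w) = -1 \<and> Y w = -1} = pm - a2"
    unfolding pm_def a2_def by (rule f3) (use hn1 in auto)
  have hm2: "measure M {w\<in>space M. h (X w) = -1 \<and> Y w = 1} = py - a1"
    unfolding py_def a1_def by (rule f3') (use hn1 in auto)
  have ym1: "measure M {w\<in>space M. Yt w = -1 \<and> Y w = -1} = pm - n2"
    unfolding pm_def n2_def by (rule f3) (use Ytn1 in auto)
  have ym2: "measure M {w\<in>space M. Yt w = 1 \<and> Y w = 1} = py - n1"
    unfolding py_def n1_def by (rule f3') (use Ytn1 in auto)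
  have H1: "measure M {w\<in>space M. h (X w) = 1} = a1 + a2" unfolding a1_def a2_def by (rule f4) measurable
  have H2: "measure M {w\<in>space M. h (X w) = -1} = (py - a1) + (pm - a2)"
    apply (subst f4) subgoal by measurable by (simp add: hm1 hm2)
  have T1: "measure M {w\<in>space M. Yt w \<noteq> 1} = n1 + (pm - n2)"
  proof -
    have "measure M {w\<in>space M. Yt w \<noteq> 1 \<and> Y w = 1} = n1" unfolding n1_def by (rule mcong) (simp add: Ytn1)
    moreover have "measure M {w\<in>space M. Yt w \<noteq> 1 \<and> Y w = -1} = pm - n2" unfolding ym1[symmetric] by (rule mcong) (simp add: Ytn1)
    note ee = calculation this
    show ?thesis apply (subst f4) subgoal by measurable using ee by simp
  qed
  have T2: "measure M {w\<in>space M. Yt w \<noteq> -1} = (py - n1) + n2"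
  proof -
    have "measure M {w\<in>space M. Yt w \<noteq> -1 \<and> Y w = 1} = py - n1" unfolding ym2[symmetric] by (rule mcong) (simp add: Ytn2)
    moreover have "measure M {w\<in>space M. Yt w \<noteq> -1 \<and> Y w = -1} = n2" unfolding n2_def by (rule mcong) (simp add: Ytn2)
    note ee = calculation this
    show ?thesis apply (subst f4) subgoal by measurable using ee by simp
  qed
  have c1: "measure M {w\<in>space M. h (X w) = 1 \<and> Yt w = -1 \<and> Y w = 1} = a1 * n1 / py"
    using ci[of 1 "-1" 1] pyz unfolding a1_def n1_def py_def by (simp add: field_simps)
  have c2: "measure M {w\<in>space M. h (X w) = 1 \<and> Yt w = -1 \<and> Y w = -1} = a2 * (pm - n2) / pm"
    using ci[of 1 "-1" "-1"] pmz ym1 unfolding a2_def pm_def by (simp add: field_simps)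
  have c3: "measure M {w\<in>space M. h (X w) = -1 \<and> Yt w = 1 \<and> Y w = 1} = (py - a1) * (py - n1) / py"
    using ci[of "-1" 1 1] pyz hm2 ym2 unfolding py_def by (simp add: field_simps)
  have c4: "measure M {w\<in>space M. h (X w) = -1 \<and> Yt w = 1 \<and> Y w = -1} = (pm - a2) * n2 / pm"
    using ci[of "-1" 1 "-1"] pmz hm1 unfolding n2_def pm_def by (simp add: field_simps)
  have "peer_risk (distr M (restrict_space borel \<X> \<Otimes>\<^sub>M count_space UNIV) (\<lambda>\<omega>. (X \<omega>, Yt \<omega>))) h
     = a1 * n1 / py + a2 * (pm - n2) / pm + (py - a1) * (py - n1) / py + (pm - a2) * n2 / pm
       - ((a1 + a2) * (n1 + (pm - n2)) + ((py - a1) + (pm - a2)) * ((py - n1) + n2))"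
    unfolding peer f1 f2 c1 c2 c3 c4 H1 H2 T1 T2 by simp
  also have "\<dots> = 2 * py * pm * (1 - n2 / pm - n1 / py) * (a2 / pm - a1 / py)"
    using pyz pmz tot by (rule alg)
  finally show ?thesis unfolding py_def pm_def n1_def n2_def a1_def a2_def .
qed



lemma tot_lemma:
  assumes prob: "prob_space M" and Y_meas[measurable]: "Y \<in> measurable M (count_space UNIV)"
    and Y_vals: "\<And>\<omega>. \<omega> \<in> space M \<Longrightarrow> (Y \<omega> :: int) \<in> {-1, 1}"
  shows "measure M {\<omega> \<in> space M. Y \<omega> = 1} + measure M {\<omega> \<in> space M. Y \<omega> = -1} = 1"
proof -
  interpret M: prob_space M by fact
  have Yn1: "\<And>w. w \<in> space M \<Longrightarrow> (Y w \<noteq> 1) = (Y w = -1)" using Y_vals by force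
  have "1 = measure M {w\<in>space M. True}" using M.prob_space by simp
  also have "\<dots> = measure M {\<omega> \<in> space M. Y \<omega> = 1} + measure M {\<omega> \<in> space M. Y \<omega> = -1}"
    by (subst msplit[OF prob, of "\<lambda>_. True" "\<lambda>w. Y w = 1"]; simp; rule mcong; simp add: Yn1)
  finally show ?thesis by simp
qed
lemma Int_Collect_sp: "{w\<in>space M. P w} \<inter> {w\<in>space M. Q w} = {w\<in>space M. P w \<and> Q w}" by auto

lemma cp_formula:
  fixes M :: "'w measure" and X :: "'w \<Rightarrow> 'a::euclidean_space" and Y :: "'w \<Rightarrow> int" and h :: "'a \<Rightarrow> int"
  assumes prob: "prob_space M"
    and X_meas[measurable]: "X \<in> measurable M (restrict_space borel \<X>)"
    and Y_meas[measurable]: "Y \<in> measurable M (count_space UNIV)"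
    and Y_vals: "\<And>\<omega>. \<omega> \<in> space M \<Longrightarrow> Y \<omega> \<in> {-1, 1}"
    and p_pos: "0 < measure M {\<omega> \<in> space M. Y \<omega> = 1}"
    and h_meas[measurable]: "h \<in> measurable (restrict_space borel \<X>) (count_space UNIV)"
    and h_vals: "\<And>x. x \<in> \<X> \<Longrightarrow> h x \<in> {-1, 1}"
  shows "cprob M {\<omega> \<in> space M. h (X \<omega>) = 1} {\<omega> \<in> space M. Y \<omega> = -1}
           + cprob M {\<omega> \<in> space M. h (X \<omega>) = -1} {\<omega> \<in> space M. Y \<omega> = 1}
    = (measure M {\<omega> \<in> space M. h (X \<omega>) = 1 \<and> Y \<omega> = -1} / measure M {\<omega> \<in> space M. Y \<omega> = -1}
         - measure M {\<omega> \<in> space M. h (X \<omega>) = 1 \<and> Y \<omega> = 1} / measure M {\<omega> \<in> space M. Y \<omega> = 1}) + 1"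
proof -
  have XX: "X w \<in> \<X>" if "w \<in> space M" for w
    using measurable_space[OF X_meas that] by (simp add: space_restrict_space)
  have hX[measurable]: "(\<lambda>w. h (X w)) \<in> measurable M (count_space UNIV)" by measurable
  have "measure M {w\<in>space M. Y w = 1} = measure M {w\<in>space M. Y w = 1 \<and> h (X w) = 1} + measure M {w\<in>space M. Y w = 1 \<and> \<not> h (X w) = 1}"
    apply (rule msplit[OF prob]) by measurable
  moreover have "measure M {w\<in>space M. Y w = 1 \<and> h (X w) = 1} = measure M {w\<in>space M. h (X w) = 1 \<and> Y w = 1}"
    by (rule mcong) auto
  moreover have "measure M {w\<in>space M. Y w = 1 \<and> \<not> h (X w) = 1} = measure M {w\<in>space M. h (X w) = -1 \<and> Y w = 1}"
    by (rule mcong) (use XX h_vals in force)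
  ultimately show ?thesis using p_pos unfolding cprob_def Int_Collect_sp by (simp add: field_simps)
qed


theorem lemma3:
  fixes M :: "'w measure"
    and \<X> :: "'a::euclidean_space set"
    and X :: "'w \<Rightarrow> 'a" and Y Yt :: "'w \<Rightarrow> int"
    and f g :: "'a \<Rightarrow> int"
  assumes prob: "prob_space M"
    and X_meas: "X \<in> measurable M (restrict_space borel \<X>)"
    and Y_meas: "Y \<in> measurable M (count_space UNIV)"
    and Yt_meas: "Yt \<in> measurable M (count_space UNIV)"
    and Y_vals: "\<And>\<omega>. \<omega> \<in> space M \<Longrightarrow> Y \<omega> \<in> {-1, 1}"
    and Yt_vals: "\<And>\<omega>. \<omega> \<in> space M \<Longrightarrow> Yt \<omega> \<in> {-1, 1}"
    and p_pos: "0 < measure M {\<omega> \<in> space M. Y \<omega> = 1}"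
    and p_lt1: "measure M {\<omega> \<in> space M. Y \<omega> = 1} < 1"
    and cond_indep: "\<And>A y yt. A \<in> sets (restrict_space borel \<X>) \<Longrightarrow>
        measure M {\<omega> \<in> space M. X \<omega> \<in> A \<and> Yt \<omega> = yt \<and> Y \<omega> = y} * measure M {\<omega> \<in> space M. Y \<omega> = y}
        = measure M {\<omega> \<in> space M. X \<omega> \<in> A \<and> Y \<omega> = y} * measure M {\<omega> \<in> space M. Yt \<omega> = yt \<and> Y \<omega> = y}"
    and noise: "cprob M {\<omega> \<in> space M. Yt \<omega> = 1} {\<omega> \<in> space M. Y \<omega> = -1}
              + cprob M {\<omega> \<in> space M. Yt \<omega> = -1} {\<omega> \<in> space M. Y \<omega> = 1} < 1"
    and f_meas: "f \<in> measurable (restrict_space borel \<X>) (count_space UNIV)"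
    and g_meas: "g \<in> measurable (restrict_space borel \<X>) (count_space UNIV)"
    and f_vals: "\<And>x. x \<in> \<X> \<Longrightarrow> f x \<in> {-1, 1}"
    and g_vals: "\<And>x. x \<in> \<X> \<Longrightarrow> g x \<in> {-1, 1}"
  shows "peer_risk (distr M (restrict_space borel \<X> \<Otimes>\<^sub>M count_space UNIV) (\<lambda>\<omega>. (X \<omega>, Yt \<omega>))) f
           \<le> peer_risk (distr M (restrict_space borel \<X> \<Otimes>\<^sub>M count_space UNIV) (\<lambda>\<omega>. (X \<omega>, Yt \<omega>))) g
         \<longleftrightarrow>
         cprob M {\<omega> \<in> space M. f (X \<omega>) = 1} {\<omega> \<in> space M. Y \<omega> = -1}
           + cprob M {\<omega> \<in> space M. f (X \<omega>) = -1} {\<omega> \<in> space M. Y \<omega> = 1}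
         \<le> cprob M {\<omega> \<in> space M. g (X \<omega>) = 1} {\<omega> \<in> space M. Y \<omega> = -1}
           + cprob M {\<omega> \<in> space M. g (X \<omega>) = -1} {\<omega> \<in> space M. Y \<omega> = 1}"
  
proof -
  let ?D = "distr M (restrict_space borel \<X> \<Otimes>\<^sub>M count_space UNIV) (\<lambda>\<omega>. (X \<omega>, Yt \<omega>))"
  define py where "py = measure M {\<omega> \<in> space M. Y \<omega> = 1}"
  define pm where "pm = measure M {\<omega> \<in> space M. Y \<omega> = -1}"
  define K where "K = 2 * py * pm
      * (1 - measure M {\<omega> \<in> space M. Yt \<omega> = 1 \<and> Y \<omega> = -1} / pm
           - measure M {\<omega> \<in> space M. Yt \<omega> = -1 \<and> Y \<omega> = 1} / py)"
  define xf where "xf = measure M {\<omega> \<in> space M. f (X \<omega>) = 1 \<and> Y \<omega> = -1} / pm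
         - measure M {\<omega> \<in> space M. f (X \<omega>) = 1 \<and> Y \<omega> = 1} / py"
  define xg where "xg = measure M {\<omega> \<in> space M. g (X \<omega>) = 1 \<and> Y \<omega> = -1} / pm
         - measure M {\<omega> \<in> space M. g (X \<omega>) = 1 \<and> Y \<omega> = 1} / py"
  have Pf: "peer_risk ?D f = K * xf"
    unfolding K_def xf_def py_def pm_def
    by (rule peer_formula[OF prob X_meas Y_meas Yt_meas Y_vals Yt_vals p_pos p_lt1 cond_indep f_meas f_vals])
  have Pg: "peer_risk ?D g = K * xg"
    unfolding K_def xg_def py_def pm_def
    by (rule peer_formula[OF prob X_meas Y_meas Yt_meas Y_vals Yt_vals p_pos p_lt1 cond_indep g_meas g_vals])
  have Cf: "cprob M {\<omega> \<in> space M. f (X \<omega>) = 1} {\<omega> \<in> space M. Y \<omega> = -1}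
           + cprob M {\<omega> \<in> space M. f (X \<omega>) = -1} {\<omega> \<in> space M. Y \<omega> = 1} = xf + 1"
    unfolding xf_def py_def pm_def by (rule cp_formula[OF prob X_meas Y_meas Y_vals p_pos f_meas f_vals])
  have Cg: "cprob M {\<omega> \<in> space M. g (X \<omega>) = 1} {\<omega> \<in> space M. Y \<omega> = -1}
           + cprob M {\<omega> \<in> space M. g (X \<omega>) = -1} {\<omega> \<in> space M. Y \<omega> = 1} = xg + 1"
    unfolding xg_def py_def pm_def by (rule cp_formula[OF prob X_meas Y_meas Y_vals p_pos g_meas g_vals])
  interpret M: prob_space M by fact
  have Yn1: "\<And>w. w \<in> space M \<Longrightarrow> (Y w \<noteq> 1) = (Y w = -1)" using Y_vals by force
  have tot: "py + pm = 1" unfolding py_def pm_def by (rule tot_lemma[OF prob Y_meas Y_vals])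
  have pyz: "py > 0" using p_pos py_def by simp
  have pmz: "pm > 0" using tot p_lt1 py_def by simp
  have "1 - measure M {\<omega> \<in> space M. Yt \<omega> = 1 \<and> Y \<omega> = -1} / pm
           - measure M {\<omega> \<in> space M. Yt \<omega> = -1 \<and> Y \<omega> = 1} / py > 0"
    using noise unfolding cprob_def Int_Collect_sp py_def pm_def by simp
  then have Kz: "K > 0" unfolding K_def using pyz pmz by simp
  show ?thesis unfolding Pf Pg Cf Cg using Kz by simp
qed

end
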